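(* Let $G$ be a finite-horizon two-player zero-sum sequential game with horizon $T$, let $\epsilon>0$ and $\alpha>0$, and let $\rho$ be a reference policy with $\rho(h_\iota)(a)\ge\epsilon$ for every AOH $h_\iota$ and every action $a\in\mathbb A$. Let $\mathfrak J$ be the MiniMaxKL objective with reference policy $\rho$ and regularization parameter $\alpha$, and let $\pi^\ast$ be the equilibrium of $G$ under $\mathfrak J$. Then the (unregularized) exploitability of $\pi^\ast$ satisfies $\text{expl}(\pi^\ast)\le\alpha T|\log\epsilon|$.
   Context: A finite-horizon two-player zero-sum sequential game consists of: players $i\in\{0,1\}$; a finite action set $\mathbb{A}$; a set of histories $\mathbb{H}$, at each of which exactly one player $\iota$ acts; each history $h$ determines each player's action-observation history (AOH) $h_i$ (perfect recall); an initial history distribution; a reward $\mathcal{R}:\mathbb{H}\times\mathbb{A}\to\mathbb{R}$ (player 0 gets $\mathcal R$, player 1 gets $-\mathcal R$); a transition function $\mathcal{T}:\mathbb{H}\times\mathbb{A}\to\Delta(\mathbb{H})$; and a horizon $T$. $h_\iota$ denotes the acting player's AOH at $h$. A policy of $i$ maps its AOHs to $\Delta(\mathbb A)$; a reference policy $\rho$ maps every AOH to a distribution over $\mathbb A$. The MiniMaxKL objective is $\mathfrak{J}(\pi_0,\pi_1)=\mathbb{E}[\sum_{t=0}^{T-1}\mathfrak{R}(H^t,A^t,\pi(H^t_\iota))\mid\pi_0,\pi_1]$ with $\mathfrak R(h,a,\delta)=\mathcal R(h,a)-\alpha\,\mathrm{KL}(\delta,\rho(h_\iota))$ if player 0 acts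 at $h$ and $\mathfrak R(h,a,\delta)=\mathcal R(h,a)+\alpha\,\mathrm{KL}(\delta,\rho(h_\iota))$ if player 1 acts, where $\pi(H^t_\iota)$ is the acting player's action distribution; player 0 maximizes and player 1 minimizes, and an equilibrium is a saddle point of $\mathfrak J$. The unregularized objective is $\mathcal J(\pi_0,\pi_1)=\mathbb{E}[\sum_{t=0}^{T-1}\mathcal R(H^t,A^t)\mid\pi_0,\pi_1]$, and the exploitability of $\pi=(\pi_0,\pi_1)$ is $\text{expl}(\pi)=\frac12\big(-\min_{\pi_1'}\mathcal J(\pi_0,\pi_1')+\max_{\pi_0'}\mathcal J(\pi_0',\pi_1)\big)$. *)

theory Defs
  imports "HOL-Probability.Probability"
begin

text \<open>A finite-horizon two-player zero-sum sequential game.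
  Histories of type 'h, actions of a finite type 'a, action-observation
  histories (AOHs) of type 'o.  Players are the naturals 0 and 1.\<close>

record ('h, 'a, 'o) game =
  g_init    :: "'h pmf"
  g_acting  :: "'h \<Rightarrow> nat"
  g_aoh     :: "nat \<Rightarrow> 'h \<Rightarrow> 'o"
  g_reward  :: "'h \<Rightarrow> 'a \<Rightarrow> real"        \<comment> \<open>reward R (player 0 gets R, player 1 gets -R)\<close>
  g_trans   :: "'h \<Rightarrow> 'a \<Rightarrow> 'h pmf"
  g_horizon :: nat

definition wf_game :: "('h, 'a, 'o) game \<Rightarrow> bool" where
  "wf_game G \<longleftrightarrow> (\<forall>h. g_acting G h \<in> {0, 1})"

type_synonym ('o, 'a) policy = "'o \<Rightarrow> 'a pmf"

definition joint_pol ::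
  "('h, 'a, 'o) game \<Rightarrow> ('o, 'a) policy \<Rightarrow> ('o, 'a) policy \<Rightarrow> 'h \<Rightarrow> 'a pmf" where
  "joint_pol G \<pi>0 \<pi>1 h =
     (if g_acting G h = 0 then \<pi>0 (g_aoh G 0 h) else \<pi>1 (g_aoh G 1 h))"

primrec val_steps ::
  "('h \<Rightarrow> 'a \<Rightarrow> 'h pmf) \<Rightarrow> ('h \<Rightarrow> 'a pmf) \<Rightarrow> ('h \<Rightarrow> 'a \<Rightarrow> real) \<Rightarrow> nat \<Rightarrow> 'h \<Rightarrow> real" where
  "val_steps Tr p r 0 h = 0"
| "val_steps Tr p r (Suc n) h =
     measure_pmf.expectation (p h)
       (\<lambda>a. r h a + measure_pmf.expectation (Tr h a) (val_steps Tr p r n))"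

definition KL :: "'a::finite pmf \<Rightarrow> 'a pmf \<Rightarrow> real" where
  "KL \<delta> \<mu> = (\<Sum>a\<in>UNIV. pmf \<delta> a * ln (pmf \<delta> a / pmf \<mu> a))"

definition J_obj ::
  "('h, 'a::finite, 'o) game \<Rightarrow> ('o, 'a) policy \<Rightarrow> ('o, 'a) policy \<Rightarrow> real" where
  "J_obj G \<pi>0 \<pi>1 =
     measure_pmf.expectation (g_init G)
       (val_steps (g_trans G) (joint_pol G \<pi>0 \<pi>1) (g_reward G) (g_horizon G))"

definition reg_reward ::
  "('h, 'a::finite, 'o) game \<Rightarrow> ('o, 'a) policy \<Rightarrow> real \<Rightarrow> 'h \<Rightarrow> 'a \<Rightarrow> 'a pmf \<Rightarrow> real" where
  "reg_reward G \<rho> \<alpha> h a \<delta> =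
     (if g_acting G h = 0
      then g_reward G h a - \<alpha> * KL \<delta> (\<rho> (g_aoh G (g_acting G h) h))
      else g_reward G h a + \<alpha> * KL \<delta> (\<rho> (g_aoh G (g_acting G h) h)))"

definition MMKL_obj ::
  "('h, 'a::finite, 'o) game \<Rightarrow> ('o, 'a) policy \<Rightarrow> real \<Rightarrow>
     ('o, 'a) policy \<Rightarrow> ('o, 'a) policy \<Rightarrow> real" where
  "MMKL_obj G \<rho> \<alpha> \<pi>0 \<pi>1 =
     measure_pmf.expectation (g_init G)
       (val_steps (g_trans G) (joint_pol G \<pi>0 \<pi>1)
          (\<lambda>h a. reg_reward G \<rho> \<alpha> h a (joint_pol G \<pi>0 \<pi>1 h)) (g_horizon G))"

definition is_saddle ::
  "(('o, 'a) policy \<Rightarrow> ('o, 'a) policy \<Rightarrow> real) \<Rightarrow> ('o, 'a) policy \<Rightarrow> ('o, 'a) policy \<Rightarrow> bool" where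
  "is_saddle F \<pi>0 \<pi>1 \<longleftrightarrow> (\<forall>\<sigma>0 \<sigma>1. F \<sigma>0 \<pi>1 \<le> F \<pi>0 \<pi>1 \<and> F \<pi>0 \<pi>1 \<le> F \<pi>0 \<sigma>1)"

definition expl ::
  "('h, 'a::finite, 'o) game \<Rightarrow> ('o, 'a) policy \<Rightarrow> ('o, 'a) policy \<Rightarrow> real" where
  "expl G \<pi>0 \<pi>1 =
     (- (INF \<sigma>1. J_obj G \<pi>0 \<sigma>1) + (SUP \<sigma>0. J_obj G \<sigma>0 \<pi>1)) / 2"

end

theory Submission imports Defs begin

lemma pmf_int:
  fixes f :: "'x \<Rightarrow> real" and p :: "'x pmf"
  assumes "\<forall>x. \<bar>f x\<bar> \<le> B"
  shows "integrable (measure_pmf p) f"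
  by (rule measure_pmf.integrable_const_bound[where B=B]) (use assms in auto)

lemma E_bound:
  fixes f :: "'x \<Rightarrow> real" and p :: "'x pmf"
  assumes "\<forall>x. \<bar>f x\<bar> \<le> B"
  shows "\<bar>measure_pmf.expectation p f\<bar> \<le> B"
proof -
  have "\<bar>measure_pmf.expectation p f\<bar> \<le> measure_pmf.expectation p (\<lambda>x. \<bar>f x\<bar>)"
    by (rule integral_abs_bound)
  also have "\<dots> \<le> measure_pmf.expectation p (\<lambda>x. B)"
    by (rule integral_mono) (use assms pmf_int[of "\<lambda>x. \<bar>f x\<bar>" B] in auto)
  also have "\<dots> = B" by simp
  finally show ?thesis .
qed

lemma E_diff:
  fixes f g :: "'x \<Rightarrow> real" and p :: "'x pmf"
  assumes "\<forall>x. \<bar>f x\<bar> \<le> B" "\<forall>x. \<bar>g x\<bar> \<le> B" "\<forall>x. \<bar>f x - g x\<bar> \<le> c"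
  shows "\<bar>measure_pmf.expectation p f - measure_pmf.expectation p g\<bar> \<le> c"
proof -
  have "measure_pmf.expectation p f - measure_pmf.expectation p g = measure_pmf.expectation p (\<lambda>x. f x - g x)"
    using pmf_int[OF assms(1), of p] pmf_int[OF assms(2), of p] by (simp add: integral_diff)
  then show ?thesis using E_bound[OF assms(3)] by simp
qed

lemma val_bound:
  assumes "\<forall>h a. \<bar>r h a\<bar> \<le> M"
  shows "\<bar>val_steps Tr p r n h\<bar> \<le> real n * M"
proof (induction n arbitrary: h)
  case 0 then show ?case by simp
next
  case (Suc n)
  have "\<forall>a. \<bar>r h a + measure_pmf.expectation (Tr h a) (val_steps Tr p r n)\<bar> \<le> M + real n * M"
  proof
    fix a
    have "\<bar>measure_pmf.expectation (Tr h a) (val_steps Tr p r n)\<bar> \<le> real n * M"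
      using E_bound Suc by blast
    moreover have "\<bar>r h a\<bar> \<le> M" using assms by blast
    ultimately show "\<bar>r h a + measure_pmf.expectation (Tr h a) (val_steps Tr p r n)\<bar> \<le> M + real n * M"
      by linarith
  qed
  then show ?case using E_bound[of _ "M + real n * M"] by (simp add: algebra_simps)
qed

lemma val_diff:
  assumes "\<forall>h a. \<bar>r h a\<bar> \<le> M" "\<forall>h a. \<bar>r' h a\<bar> \<le> M" "\<forall>h a. \<bar>r h a - r' h a\<bar> \<le> c"
  shows "\<bar>val_steps Tr p r n h - val_steps Tr p r' n h\<bar> \<le> real n * c"
proof (induction n arbitrary: h)
  case 0 then show ?case by simp
next
  case (Suc n)
  let ?f = "\<lambda>a. r h a + measure_pmf.expectation (Tr h a) (val_steps Tr p r n)"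
  let ?g = "\<lambda>a. r' h a + measure_pmf.expectation (Tr h a) (val_steps Tr p r' n)"
  have b1: "\<forall>a. \<bar>?f a\<bar> \<le> M + real n * M"
  proof
    fix a
    have "\<bar>measure_pmf.expectation (Tr h a) (val_steps Tr p r n)\<bar> \<le> real n * M"
      by (rule E_bound) (use val_bound[OF assms(1)] in blast)
    moreover have "\<bar>r h a\<bar> \<le> M" using assms by blast
    ultimately show "\<bar>?f a\<bar> \<le> M + real n * M" by linarith
  qed
  have b2: "\<forall>a. \<bar>?g a\<bar> \<le> M + real n * M"
  proof
    fix a
    have "\<bar>measure_pmf.expectation (Tr h a) (val_steps Tr p r' n)\<bar> \<le> real n * M"
      by (rule E_bound) (use val_bound[OF assms(2)] in blast)
    moreover have "\<bar>r' h a\<bar> \<le> M" using assms by blast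
    ultimately show "\<bar>?g a\<bar> \<le> M + real n * M" by linarith
  qed
  have d: "\<forall>a. \<bar>?f a - ?g a\<bar> \<le> c + real n * c"
  proof
    fix a
    have "\<bar>measure_pmf.expectation (Tr h a) (val_steps Tr p r n) - measure_pmf.expectation (Tr h a) (val_steps Tr p r' n)\<bar> \<le> real n * c"
      by (rule E_diff[where B="real n * M"]) (use val_bound[OF assms(1)] val_bound[OF assms(2)] Suc in auto)
    moreover have "\<bar>r h a - r' h a\<bar> \<le> c" using assms by blast
    ultimately show "\<bar>?f a - ?g a\<bar> \<le> c + real n * c" by linarith
  qed
  show ?case using E_diff[OF b1 b2 d] by (simp add: algebra_simps)
qed

lemma KL_bounds:
  fixes \<delta> \<mu> :: "'a::finite pmf"
  assumes "\<epsilon> > 0" "\<forall>a. pmf \<mu> a \<ge> \<epsilon>"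
  shows "\<bar>KL \<delta> \<mu>\<bar> \<le> - ln \<epsilon>"
proof -
  have s1: "(\<Sum>a\<in>UNIV. pmf \<delta> a) = 1" "(\<Sum>a\<in>UNIV. pmf \<mu> a) = 1"
    by (auto intro: sum_pmf_eq_1)
  have lo: "pmf \<delta> a * ln (pmf \<delta> a / pmf \<mu> a) \<ge> pmf \<delta> a - pmf \<mu> a" for a
  proof (cases "pmf \<delta> a = 0")
    case True then show ?thesis by simp
  next
    case False
    then have dp: "pmf \<delta> a > 0" using pmf_nonneg[of \<delta> a] by linarith
    have mp: "pmf \<mu> a > 0" using assms by (meson less_le_trans)
    have "ln (pmf \<mu> a / pmf \<delta> a) \<le> pmf \<mu> a / pmf \<delta> a - 1"
      by (rule ln_le_minus_one) (use dp mp in auto)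
    moreover have "ln (pmf \<delta> a / pmf \<mu> a) = - ln (pmf \<mu> a / pmf \<delta> a)"
      using dp mp by (simp add: ln_div)
    ultimately have "ln (pmf \<delta> a / pmf \<mu> a) \<ge> 1 - pmf \<mu> a / pmf \<delta> a" by linarith
    then have "pmf \<delta> a * ln (pmf \<delta> a / pmf \<mu> a) \<ge> pmf \<delta> a * (1 - pmf \<mu> a / pmf \<delta> a)"
      using dp by (simp add: mult_left_mono)
    then show ?thesis using dp by (simp add: algebra_simps)
  qed
  have hi: "pmf \<delta> a * ln (pmf \<delta> a / pmf \<mu> a) \<le> pmf \<delta> a * (- ln \<epsilon>)" for a
  proof (cases "pmf \<delta> a = 0")
    case True then show ?thesis by simp
  next
    case False
    then have dp: "pmf \<delta> a > 0" using pmf_nonneg[of \<delta> a] by linarith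
    have mp: "pmf \<mu> a \<ge> \<epsilon>" using assms by auto
    have "pmf \<delta> a / pmf \<mu> a \<le> 1 / \<epsilon>"
      using pmf_le_1[of \<delta> a] mp assms(1) dp by (simp add: frac_le)
    then have "ln (pmf \<delta> a / pmf \<mu> a) \<le> ln (1 / \<epsilon>)"
      using dp mp assms(1) by (subst ln_le_cancel_iff) auto
    also have "\<dots> = - ln \<epsilon>" using assms(1) by (simp add: ln_div)
    finally show ?thesis using dp by (intro mult_left_mono) auto
  qed
  have "KL \<delta> \<mu> \<ge> (\<Sum>a\<in>UNIV. pmf \<delta> a - pmf \<mu> a)"
    unfolding KL_def by (rule sum_mono) (use lo in auto)
  then have g0: "KL \<delta> \<mu> \<ge> 0" using s1 by (simp add: sum_subtractf)
  have "KL \<delta> \<mu> \<le> (\<Sum>a\<in>UNIV. pmf \<delta> a * (- ln \<epsilon>))"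
    unfolding KL_def by (rule sum_mono) (use hi in auto)
  also have "\<dots> = - ln \<epsilon>" using s1 by (simp only: sum_distrib_right[symmetric])
  finally show ?thesis using g0 by simp
qed


theorem proposition5p13:
  fixes G :: "('h, 'a::finite, 'o) game"
    and \<rho> \<pi>0 \<pi>1 :: "('o, 'a) policy"
    and \<epsilon> \<alpha> :: real
  assumes "wf_game G"
    and "\<exists>B. \<forall>h a. \<bar>g_reward G h a\<bar> \<le> B"
    and "\<epsilon> > 0" and "\<alpha> > 0"
    and "\<forall>i\<in>{0, 1}. \<forall>h a. pmf (\<rho> (g_aoh G i h)) a \<ge> \<epsilon>"
    and "is_saddle (MMKL_obj G \<rho> \<alpha>) \<pi>0 \<pi>1"
  shows "expl G \<pi>0 \<pi>1 \<le> \<alpha> * real (g_horizon G) * \<bar>ln \<epsilon>\<bar>"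
proof -
  obtain B0 where B0: "\<forall>h a. \<bar>g_reward G h a\<bar> \<le> B0" using assms(2) by blast
  define L where "L = - ln \<epsilon>"
  define c where "c = \<alpha> * L"
  define T where "T = g_horizon G"
  have "\<epsilon> \<le> pmf (\<rho> (g_aoh G 0 undefined)) undefined" using assms(5) by simp
  then have e1: "\<epsilon> \<le> 1" using pmf_le_1[of "\<rho> (g_aoh G 0 undefined)" undefined] by linarith
  have absL: "\<bar>ln \<epsilon>\<bar> = L" using e1 assms(3) unfolding L_def by simp
  have KLb: "\<bar>KL \<delta> (\<rho> (g_aoh G (g_acting G h) h))\<bar> \<le> L" for \<delta> h
  proof -
    have "g_acting G h \<in> {0,1}" using assms(1) unfolding wf_game_def by blast
    then have "\<forall>a. pmf (\<rho> (g_aoh G (g_acting G h) h)) a \<ge> \<epsilon>" using assms(5) by blast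
    then show ?thesis unfolding L_def using KL_bounds assms(3) by blast
  qed
  have close: "\<bar>J_obj G \<sigma>0 \<sigma>1 - MMKL_obj G \<rho> \<alpha> \<sigma>0 \<sigma>1\<bar> \<le> real T * c" for \<sigma>0 \<sigma>1
  proof -
    define p where "p = joint_pol G \<sigma>0 \<sigma>1"
    define r' where "r' = (\<lambda>h a. reg_reward G \<rho> \<alpha> h a (p h))"
    have d: "\<forall>h a. \<bar>g_reward G h a - r' h a\<bar> \<le> c"
    proof (intro allI)
      fix h a
      have "\<bar>\<alpha> * KL (p h) (\<rho> (g_aoh G (g_acting G h) h))\<bar> \<le> c"
        using KLb[of "p h" h] assms(4) unfolding c_def by (simp add: abs_mult)
      then show "\<bar>g_reward G h a - r' h a\<bar> \<le> c"
        unfolding r'_def reg_reward_def by auto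
    qed
    have "c \<ge> 0" using d by (meson abs_ge_zero order_trans)
    then have b1: "\<forall>h a. \<bar>g_reward G h a\<bar> \<le> B0 + c"
      using B0 by (metis add_increasing2)
    have b2: "\<forall>h a. \<bar>r' h a\<bar> \<le> B0 + c"
    proof (intro allI)
      fix h a
      show "\<bar>r' h a\<bar> \<le> B0 + c" using B0[rule_format, of h a] d[rule_format, of h a] by linarith
    qed
    have "\<bar>measure_pmf.expectation (g_init G) (val_steps (g_trans G) p (g_reward G) T)
        - measure_pmf.expectation (g_init G) (val_steps (g_trans G) p r' T)\<bar> \<le> real T * c"
      by (rule E_diff[where B="real T * (B0 + c)"])
        (use val_bound[OF b1] val_bound[OF b2] val_diff[OF b1 b2 d] in auto)
    then show ?thesis unfolding J_obj_def MMKL_obj_def p_def r'_def T_def by simp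
  qed
  let ?F = "MMKL_obj G \<rho> \<alpha>"
  have sup: "(SUP \<sigma>0. J_obj G \<sigma>0 \<pi>1) \<le> ?F \<pi>0 \<pi>1 + real T * c"
  proof (rule cSUP_least)
    fix \<sigma>0
    have "?F \<sigma>0 \<pi>1 \<le> ?F \<pi>0 \<pi>1" using assms(6) unfolding is_saddle_def by blast
    then show "J_obj G \<sigma>0 \<pi>1 \<le> ?F \<pi>0 \<pi>1 + real T * c" using close[of \<sigma>0 \<pi>1] by linarith
  qed simp
  have inf: "?F \<pi>0 \<pi>1 - real T * c \<le> (INF \<sigma>1. J_obj G \<pi>0 \<sigma>1)"
  proof (rule cINF_greatest)
    fix \<sigma>1
    have "?F \<pi>0 \<pi>1 \<le> ?F \<pi>0 \<sigma>1" using assms(6) unfolding is_saddle_def by blast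
    then show "?F \<pi>0 \<pi>1 - real T * c \<le> J_obj G \<pi>0 \<sigma>1" using close[of \<pi>0 \<sigma>1] by linarith
  qed simp
  have "- (INF \<sigma>1. J_obj G \<pi>0 \<sigma>1) + (SUP \<sigma>0. J_obj G \<sigma>0 \<pi>1) \<le> 2 * (real T * c)"
    using sup inf by linarith
  then have "expl G \<pi>0 \<pi>1 \<le> real T * c" unfolding expl_def by simp
  then show ?thesis unfolding c_def T_def absL by (simp add: algebra_simps)
qed

end
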